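(* In the setting described in the context (in particular, the modified 4-player stage game is $\alpha$-strongly monotone for some $\alpha>0$, so every stage game has a unique RQE), suppose the risk-averse quantal-response Bellman operator $\mathcal{T}$ has a unique fixed point $\mathbf{Q}^*$. Define the Markov policy $\pi^*$ state-wise by letting $\pi^*(\cdot\mid s)$ be the unique RQE of the stage game with payoff matrix pair $\mathbf{Q}^*(s,\cdot)$. Then $\pi^*$ is a stationary Markov RQE of the Markov game.
   Context: A discounted two-player Markov game has a finite state space $\mathcal{S}$, finite action sets $\mathcal{A}_1,\mathcal{A}_2$ with $\mathcal{A}=\mathcal{A}_1\times\mathcal{A}_2$, deterministic rewards $r_i:\mathcal{S}\times\mathcal{A}\to[0,1]$, discount factor $\gamma\in[0,1)$ and transition kernel $P(\cdot\mid s,\mathbf{a})\in\Delta_{\mathcal{S}}$; $-i$ denotes the other player, $\Delta_n$ the probability simplex in $\mathbb{R}^n$. For each $i$ fix $\epsilon_i>0$, a differentiable strictly convex $\nu_i$ on (a neighbourhood of) $\Delta_{|\mathcal{A}_i|}$, a differentiable $D_i:\Delta_{|\mathcal{A}_{-i}|}\times\Delta_{|\mathcal{A}_{-i}|}\to\mathbb{R}$ convex in its first argument, and an environment penalty $D_i^{\mathrm{env}}:\Delta_{\mathcal{S}}\times\Delta_{\mathcal{S}}\to[0,\infty)$. Stage games: for $\mathbf{R}=(R_1,R_2)$, $R_i\in\mathbb{R}^{|\mathcal{A}_i|\times|\mathcal{A}_{-i}|}$, let $f_i(\pi_i,\pi_{-i};R_i)=\sup_{p_i\in\Delta_{|\mathcal{A}_{-i}|}}[-\pi_i^TR_ip_i-D_i(p_i,\pi_{-i})]+\epsilon_i\nu_i(\pi_i)$;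 an RQE is $(\pi_1^*,\pi_2^* )$ with $f_i(\pi_i^*,\pi_{-i}^*;R_i)\le f_i(\pi_i,\pi_{-i}^*;R_i)$ for all $\pi_i$, $i=1,2$, and for the unique RQE $\texttt{RQE}_i(\mathbf{R}):=f_i(\pi_i^*,\pi_{-i}^*;R_i)$. The modified 4-player game with $z=(\pi_1,\pi_2,p_1,p_2)\in\mathcal{Z}=\Delta_{|\mathcal{A}_1|}\times\Delta_{|\mathcal{A}_2|}\times\Delta_{|\mathcal{A}_2|}\times\Delta_{|\mathcal{A}_1|}$ has gradient operator $F(z;\mathbf{R})=(-R_1p_1+\epsilon_1\nabla\nu_1(\pi_1),\,-R_2p_2+\epsilon_2\nabla\nu_2(\pi_2),\,R_1^T\pi_1+\nabla_{p_1}D_1(p_1,\pi_2),\,R_2^T\pi_2+\nabla_{p_2}D_2(p_2,\pi_1))$ and is $\alpha$-strongly monotone if $(z-z')^T(F(z;\mathbf{R})-F(z';\mathbf{R}))\ge\alpha\|z-z'\|_2^2$ for all $z,z'$ (independent of $\mathbf{R}$). For a $Q$ function pair $\mathbf{Q}=(Q_1,Q_2)$, $Q_i:\mathcal{S}\times\mathcal{A}\to\mathbb{R}$, $\mathbf{Q}(s,\cdot)$ is the stage payoff pair with $[Q_i(s,\cdot)]_{mn}=Q_i(s,(a_i=m,a_{-i}=n))$, and $(\mathcal{T}\mathbf{Q})_i(s,\mathbf{a})=r_i(s,\mathbf{a})+\gamma\inf_{\widetilde P\in\Delta_{\mathcal{S}}}\{-\mathbb{E}_{s'\sim\widetilde P}[\texttt{RQE}_i(\mathbf{Q}(s',\cdot))]+D_i^{\mathrm{env}}(\widetilde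 P,P(\cdot\mid s,\mathbf{a}))\}$. For a Markov policy pair $\pi=(\pi_1,\pi_2)$, $\pi_i:\mathcal{S}\to\Delta_{|\mathcal{A}_i|}$, the value and $Q$ functions $V_i^{\epsilon_i,\pi}$, $Q_i^{\epsilon_i,\pi}$ are defined jointly by $V_i^{\epsilon_i,\pi}(s)=-f_i(\pi_i(s),\pi_{-i}(s);Q_i^{\epsilon_i,\pi}(s,\cdot))$ and $Q_i^{\epsilon_i,\pi}(s,\mathbf{a})=r_i(s,\mathbf{a})+\gamma\inf_{\widetilde P\in\Delta_{\mathcal{S}}}\{\mathbb{E}_{s'\sim\widetilde P}V_i^{\epsilon_i,\pi}(s')+D_i^{\mathrm{env}}(\widetilde P,P(\cdot\mid s,\mathbf{a}))\}$. A pair $\pi^*$ is a stationary Markov RQE if for both $i$ and all $s\in\mathcal{S}$, $V_i^{\epsilon_i,\pi^*}(s)\ge V_i^{\epsilon_i,(\pi_i,\pi_{-i}^* )}(s)$ for every Markov policy $\pi_i:\mathcal{S}\to\Delta_{|\mathcal{A}_i|}$. *)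

theory Defs
  imports "HOL-Analysis.Analysis"
begin

definition prob_simplex :: "(real^'n) set" where
  "prob_simplex = {p. (\<forall>i. 0 \<le> p $ i) \<and> (\<Sum>i\<in>UNIV. p $ i) = 1}"

definition strictly_convex_on :: "'a::real_vector set \<Rightarrow> ('a \<Rightarrow> real) \<Rightarrow> bool" where
  "strictly_convex_on S f \<longleftrightarrow> convex S \<and>
     (\<forall>x\<in>S. \<forall>y\<in>S. x \<noteq> y \<longrightarrow> (\<forall>u::real. 0 < u \<and> u < 1 \<longrightarrow>
        f (u *\<^sub>R x + (1 - u) *\<^sub>R y) < u * f x + (1 - u) * f y))"

record ('s, 'a1, 'a2) mgame =
  rew1  :: "'s \<Rightarrow> 'a1 \<times> 'a2 \<Rightarrow> real"
  rew2  :: "'s \<Rightarrow> 'a1 \<times> 'a2 \<Rightarrow> real"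
  disc  :: real
  trans :: "'s \<Rightarrow> 'a1 \<times> 'a2 \<Rightarrow> real^'s::finite"
  eps1  :: real
  eps2  :: real
  nu1   :: "real^'a1::finite \<Rightarrow> real"
  nu2   :: "real^'a2::finite \<Rightarrow> real"
  D1    :: "real^'a2 \<Rightarrow> real^'a2 \<Rightarrow> real"
  D2    :: "real^'a1 \<Rightarrow> real^'a1 \<Rightarrow> real"
  Denv1 :: "real^'s \<Rightarrow> real^'s \<Rightarrow> real"
  Denv2 :: "real^'s \<Rightarrow> real^'s \<Rightarrow> real"

text \<open>Stage cost f_i(pi_i, pi_{-i}; R_i) for a player with own action type 'a and opponent
  action type 'b; R has rows indexed by own actions, columns by opponent actions.\<close>
definition stage_cost ::
  "real \<Rightarrow> (real^'a::finite \<Rightarrow> real) \<Rightarrow> (real^'b::finite \<Rightarrow> real^'b \<Rightarrow> real)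
    \<Rightarrow> real^'b^'a \<Rightarrow> real^'a \<Rightarrow> real^'b \<Rightarrow> real" where
  "stage_cost eps nu D R pii pimi =
     (SUP p\<in>prob_simplex. - (pii \<bullet> (R *v p)) - D p pimi) + eps * nu pii"

definition f1 :: "('s::finite, 'a1::finite, 'a2::finite) mgame \<Rightarrow> real^'a2^'a1 \<Rightarrow> real^'a1 \<Rightarrow> real^'a2 \<Rightarrow> real" where
  "f1 G = stage_cost (eps1 G) (nu1 G) (D1 G)"

definition f2 :: "('s::finite, 'a1::finite, 'a2::finite) mgame \<Rightarrow> real^'a1^'a2 \<Rightarrow> real^'a2 \<Rightarrow> real^'a1 \<Rightarrow> real" where
  "f2 G = stage_cost (eps2 G) (nu2 G) (D2 G)"

definition is_RQE :: "('s::finite, 'a1::finite, 'a2::finite) mgame \<Rightarrow> real^'a2^'a1 \<Rightarrow> real^'a1^'a2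
    \<Rightarrow> real^'a1 \<Rightarrow> real^'a2 \<Rightarrow> bool" where
  "is_RQE G R1 R2 x1 x2 \<longleftrightarrow> x1 \<in> prob_simplex \<and> x2 \<in> prob_simplex \<and>
     (\<forall>y\<in>prob_simplex. f1 G R1 x1 x2 \<le> f1 G R1 y x2) \<and>
     (\<forall>y\<in>prob_simplex. f2 G R2 x2 x1 \<le> f2 G R2 y x1)"

definition RQE1 :: "('s::finite, 'a1::finite, 'a2::finite) mgame \<Rightarrow> real^'a2^'a1 \<Rightarrow> real^'a1^'a2 \<Rightarrow> real" where
  "RQE1 G R1 R2 = (case THE x. is_RQE G R1 R2 (fst x) (snd x) of (x1, x2) \<Rightarrow> f1 G R1 x1 x2)"

definition RQE2 :: "('s::finite, 'a1::finite, 'a2::finite) mgame \<Rightarrow> real^'a2^'a1 \<Rightarrow> real^'a1^'a2 \<Rightarrow> real" where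
  "RQE2 G R1 R2 = (case THE x. is_RQE G R1 R2 (fst x) (snd x) of (x1, x2) \<Rightarrow> f2 G R2 x2 x1)"

text \<open>Stage payoff matrices Q_i(s,.): [Q_i(s,.)]_{mn} = Q_i(s,(a_i = m, a_{-i} = n)).\<close>
definition mat1 :: "('s \<Rightarrow> 'a1::finite \<times> 'a2::finite \<Rightarrow> real) \<Rightarrow> 's \<Rightarrow> real^'a2^'a1" where
  "mat1 Q s = (\<chi> m n. Q s (m, n))"

definition mat2 :: "('s \<Rightarrow> 'a1::finite \<times> 'a2::finite \<Rightarrow> real) \<Rightarrow> 's \<Rightarrow> real^'a1^'a2" where
  "mat2 Q s = (\<chi> m n. Q s (n, m))"

definition bellman :: "('s::finite, 'a1::finite, 'a2::finite) mgame
    \<Rightarrow> ('s \<Rightarrow> 'a1 \<times> 'a2 \<Rightarrow> real) \<times> ('s \<Rightarrow> 'a1 \<times> 'a2 \<Rightarrow> real)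
    \<Rightarrow> ('s \<Rightarrow> 'a1 \<times> 'a2 \<Rightarrow> real) \<times> ('s \<Rightarrow> 'a1 \<times> 'a2 \<Rightarrow> real)" where
  "bellman G Q =
    ((\<lambda>s a. rew1 G s a + disc G *
        (INF Pt\<in>prob_simplex. - (\<Sum>s'\<in>UNIV. Pt $ s' * RQE1 G (mat1 (fst Q) s') (mat2 (snd Q) s'))
                         + Denv1 G Pt (trans G s a))),
     (\<lambda>s a. rew2 G s a + disc G *
        (INF Pt\<in>prob_simplex. - (\<Sum>s'\<in>UNIV. Pt $ s' * RQE2 G (mat1 (fst Q) s') (mat2 (snd Q) s'))
                         + Denv2 G Pt (trans G s a))))"

definition polQ :: "real \<Rightarrow> ('s::finite \<Rightarrow> 'a1 \<times> 'a2 \<Rightarrow> real) \<Rightarrow> ('s \<Rightarrow> 'a1 \<times> 'a2 \<Rightarrow> real^'s)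
    \<Rightarrow> (real^'s \<Rightarrow> real^'s \<Rightarrow> real) \<Rightarrow> (('s \<Rightarrow> 'a1 \<times> 'a2 \<Rightarrow> real) \<Rightarrow> 's \<Rightarrow> 'm)
    \<Rightarrow> ('m \<Rightarrow> 'x \<Rightarrow> 'y \<Rightarrow> real) \<Rightarrow> ('s \<Rightarrow> 'x) \<Rightarrow> ('s \<Rightarrow> 'y) \<Rightarrow> ('s \<Rightarrow> 'a1 \<times> 'a2 \<Rightarrow> real)" where
  "polQ gamma r P Denv M f pii pimi =
     (THE Q. \<forall>s a. Q s a = r s a + gamma *
        (INF Pt\<in>prob_simplex. (\<Sum>s'\<in>UNIV. Pt $ s' * (- f (M Q s') (pii s') (pimi s'))) + Denv Pt (P s a)))"

definition polV :: "real \<Rightarrow> ('s::finite \<Rightarrow> 'a1 \<times> 'a2 \<Rightarrow> real) \<Rightarrow> ('s \<Rightarrow> 'a1 \<times> 'a2 \<Rightarrow> real^'s)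
    \<Rightarrow> (real^'s \<Rightarrow> real^'s \<Rightarrow> real) \<Rightarrow> (('s \<Rightarrow> 'a1 \<times> 'a2 \<Rightarrow> real) \<Rightarrow> 's \<Rightarrow> 'm)
    \<Rightarrow> ('m \<Rightarrow> 'x \<Rightarrow> 'y \<Rightarrow> real) \<Rightarrow> ('s \<Rightarrow> 'x) \<Rightarrow> ('s \<Rightarrow> 'y) \<Rightarrow> 's \<Rightarrow> real" where
  "polV gamma r P Denv M f pii pimi s = - f (M (polQ gamma r P Denv M f pii pimi) s) (pii s) (pimi s)"

definition V1 :: "('s::finite, 'a1::finite, 'a2::finite) mgame \<Rightarrow> ('s \<Rightarrow> real^'a1) \<Rightarrow> ('s \<Rightarrow> real^'a2) \<Rightarrow> 's \<Rightarrow> real" where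
  "V1 G pi1 pi2 = polV (disc G) (rew1 G) (trans G) (Denv1 G) mat1 (f1 G) pi1 pi2"

definition V2 :: "('s::finite, 'a1::finite, 'a2::finite) mgame \<Rightarrow> ('s \<Rightarrow> real^'a1) \<Rightarrow> ('s \<Rightarrow> real^'a2) \<Rightarrow> 's \<Rightarrow> real" where
  "V2 G pi1 pi2 = polV (disc G) (rew2 G) (trans G) (Denv2 G) mat2 (f2 G) pi2 pi1"

definition markov_policy :: "('s \<Rightarrow> real^'a::finite) \<Rightarrow> bool" where
  "markov_policy pol \<longleftrightarrow> (\<forall>s. pol s \<in> prob_simplex)"

definition is_markov_RQE :: "('s::finite, 'a1::finite, 'a2::finite) mgame \<Rightarrow> ('s \<Rightarrow> real^'a1) \<Rightarrow> ('s \<Rightarrow> real^'a2) \<Rightarrow> bool" where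
  "is_markov_RQE G pi1 pi2 \<longleftrightarrow> markov_policy pi1 \<and> markov_policy pi2 \<and>
     (\<forall>pi1'. markov_policy pi1' \<longrightarrow> (\<forall>s. V1 G pi1 pi2 s \<ge> V1 G pi1' pi2 s)) \<and>
     (\<forall>pi2'. markov_policy pi2' \<longrightarrow> (\<forall>s. V2 G pi1 pi2 s \<ge> V2 G pi1 pi2' s))"

text \<open>alpha-strong monotonicity of the modified 4-player game gradient operator F(z;R),
  for all payoff pairs R, given gradient maps gnu1, gnu2 of nu1, nu2 and partial gradients
  gD1, gD2 of D1, D2 with respect to their first argument.\<close>
definition strongly_monotone ::
  "('s::finite, 'a1::finite, 'a2::finite) mgame \<Rightarrow> (real^'a1 \<Rightarrow> real^'a1) \<Rightarrow> (real^'a2 \<Rightarrow> real^'a2)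
    \<Rightarrow> (real^'a2 \<Rightarrow> real^'a2 \<Rightarrow> real^'a2) \<Rightarrow> (real^'a1 \<Rightarrow> real^'a1 \<Rightarrow> real^'a1) \<Rightarrow> real \<Rightarrow> bool" where
  "strongly_monotone G gnu1 gnu2 gD1 gD2 alpha \<longleftrightarrow>
    (\<forall>(R1::real^'a2^'a1) (R2::real^'a1^'a2).
     \<forall>x1\<in>prob_simplex. \<forall>x2\<in>prob_simplex. \<forall>p1\<in>prob_simplex. \<forall>p2\<in>prob_simplex.
     \<forall>y1\<in>prob_simplex. \<forall>y2\<in>prob_simplex. \<forall>q1\<in>prob_simplex. \<forall>q2\<in>prob_simplex.
       (x1 - y1) \<bullet> ((- (R1 *v p1) + eps1 G *\<^sub>R gnu1 x1) - (- (R1 *v q1) + eps1 G *\<^sub>R gnu1 y1))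
     + (x2 - y2) \<bullet> ((- (R2 *v p2) + eps2 G *\<^sub>R gnu2 x2) - (- (R2 *v q2) + eps2 G *\<^sub>R gnu2 y2))
     + (p1 - q1) \<bullet> ((transpose R1 *v x1 + gD1 p1 x2) - (transpose R1 *v y1 + gD1 q1 y2))
     + (p2 - q2) \<bullet> ((transpose R2 *v x2 + gD2 p2 x1) - (transpose R2 *v y2 + gD2 q2 y1))
     \<ge> alpha * ((norm (x1 - y1))\<^sup>2 + (norm (x2 - y2))\<^sup>2 + (norm (p1 - q1))\<^sup>2 + (norm (p2 - q2))\<^sup>2))"

end

theory Submission
  imports Defs
begin

lemma simplex_nonempty: "prob_simplex \<noteq> ({} :: (real^'n::finite) set)"
proof -
  have "(\<chi> i. 1 / real CARD('n)) \<in> (prob_simplex :: (real^'n) set)"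
    unfolding prob_simplex_def by simp
  then show ?thesis by blast
qed

lemma simplex_compact: "compact (prob_simplex :: (real^'n::finite) set)"
proof -
  have cl: "closed (prob_simplex :: (real^'n) set)"
  proof -
    have "prob_simplex = (\<Inter>i. {p::real^'n. 0 \<le> p $ i}) \<inter> {p. (\<Sum>i\<in>UNIV. p $ i) = 1}"
      unfolding prob_simplex_def by auto
    moreover have "closed {p::real^'n. (\<Sum>i\<in>UNIV. p $ i) = 1}"
      by (rule closed_Collect_eq) (auto intro!: continuous_intros)
    moreover have "closed {p::real^'n. 0 \<le> p $ i}" for i
      by (rule closed_Collect_le) (auto intro!: continuous_intros)
    ultimately show ?thesis by (metis closed_INT closed_Int)
  qed
  have "bounded (prob_simplex :: (real^'n) set)"
    unfolding bounded_iff
  proof (intro exI ballI)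
    fix x :: "real^'n" assume "x \<in> prob_simplex"
    then have "(\<Sum>i\<in>UNIV. \<bar>x $ i\<bar>) = 1" unfolding prob_simplex_def by auto
    then show "norm x \<le> 1" using norm_le_l1_cart[of x] by simp
  qed
  then show ?thesis using cl compact_eq_bounded_closed by blast
qed

lemma simplex_convex: "convex (prob_simplex :: (real^'n::finite) set)"
  unfolding convex_def prob_simplex_def
  by (auto simp: sum.distrib sum_distrib_left[symmetric])

lemma simplex_sum: "p \<in> prob_simplex \<Longrightarrow> (\<Sum>i\<in>UNIV. p $ i) = 1"
  and simplex_nonneg: "p \<in> prob_simplex \<Longrightarrow> 0 \<le> p $ i"
  unfolding prob_simplex_def by auto


section \<open>Abstract fixed points\<close>

lemma fp_compare:
  fixes T :: "('s::finite \<Rightarrow> 'c::finite \<Rightarrow> real) \<Rightarrow> ('s \<Rightarrow> 'c \<Rightarrow> real)"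
    and Q Q' :: "'s \<Rightarrow> 'c \<Rightarrow> real"
  assumes mono: "\<And>Q Q' s a. (\<And>s a. Q s a \<le> Q' s a) \<Longrightarrow> T Q s a \<le> T Q' s a"
    and shift: "\<And>Q c s a. T (\<lambda>s a. Q s a + c) s a = T Q s a + g * c"
    and g: "0 \<le> g" "g < 1"
    and fp: "T Q' = Q'" and sup: "\<And>s a. T Q s a \<le> Q s a"
  shows "Q' s a \<le> Q s a"
proof -
  define h where "h = (\<lambda>(s, a). Q' s a - Q s a)"
  define m where "m = Max (range h)"
  have fin: "finite (range h)" by simp
  have hm: "h x \<le> m" for x unfolding m_def using fin by simp
  obtain x0 where x0: "h x0 = m" unfolding m_def using Max_in[OF fin] by fastforce
  obtain s0 a0 where sa0: "x0 = (s0, a0)" by fastforce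
  have le: "Q' s a \<le> Q s a + m" for s a using hm[of "(s,a)"] unfolding h_def by simp
  have "Q' s0 a0 = T Q' s0 a0" using fp by simp
  also have "\<dots> \<le> T (\<lambda>s a. Q s a + m) s0 a0" by (rule mono) (rule le)
  also have "\<dots> = T Q s0 a0 + g * m" by (rule shift)
  also have "\<dots> \<le> Q s0 a0 + g * m" using sup by simp
  finally have "m \<le> g * m" using x0 sa0 unfolding h_def by simp
  then have "m \<le> 0" using g by (smt (verit) mult_le_cancel_right1 mult_nonneg_nonneg)
  then show ?thesis using le by (smt (verit))
qed

lemma fp_exists:
  fixes T :: "('s::finite \<Rightarrow> 'c::finite \<Rightarrow> real) \<Rightarrow> ('s \<Rightarrow> 'c \<Rightarrow> real)"
  assumes mono: "\<And>Q Q' s a. (\<And>s a. Q s a \<le> Q' s a) \<Longrightarrow> T Q s a \<le> T Q' s a"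
    and shift: "\<And>Q c s a. T (\<lambda>s a. Q s a + c) s a = T Q s a + g * c"
    and g: "0 \<le> g" "g < 1"
  shows "\<exists>Q. T Q = Q"
proof -
  define Z where "Z = (\<lambda>(s::'s) (a::'c). 0::real)"
  define B where "B = Max (range (\<lambda>(s, a). \<bar>T Z s a\<bar>))"
  have B: "\<bar>T Z s a\<bar> \<le> B" for s a
    unfolding B_def by (rule Max_ge) auto
  define hi where "hi = B / (1 - g)"
  have hi: "B + g * hi = hi" using g unfolding hi_def by (simp add: field_simps)
  have hi0: "0 \<le> hi" using B[of undefined undefined] g unfolding hi_def by simp
  have Tc: "T (\<lambda>(s::'s) (a::'c). c) s a = T Z s a + g * c" for c s a
    using shift[of Z c s a] unfolding Z_def by simp
  define box where "box = {Q::'s\<Rightarrow>'c\<Rightarrow>real. \<forall>s a. - hi \<le> Q s a \<and> Q s a \<le> hi}"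
  have boxT: "T Q \<in> box" if "Q \<in> box" for Q
  proof -
    have "T Q s a \<le> hi \<and> - hi \<le> T Q s a" for s a
    proof
      have "T Q s a \<le> T (\<lambda>s a. hi) s a" by (rule mono) (use that in \<open>auto simp: box_def\<close>)
      also have "\<dots> \<le> hi" using Tc[of hi s a] B[of s a] hi by simp
      finally show "T Q s a \<le> hi" .
      have "- hi \<le> T (\<lambda>s a. - hi) s a" using Tc[of "-hi" s a] B[of s a] hi by simp
      also have "\<dots> \<le> T Q s a" by (rule mono) (use that in \<open>auto simp: box_def\<close>)
      finally show "- hi \<le> T Q s a" .
    qed
    then show ?thesis unfolding box_def by auto
  qed
  define S where "S = {Q \<in> box. \<forall>s a. Q s a \<le> T Q s a}"
  have lo_in: "(\<lambda>s a. - hi) \<in> S"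
  proof -
    have lb: "(\<lambda>s a. - hi) \<in> box" unfolding box_def using hi0 by auto
    then have "T (\<lambda>s a. - hi) \<in> box" by (rule boxT)
    then show ?thesis using lb unfolding S_def box_def by auto
  qed
  then have Sne: "S \<noteq> {}" by auto
  have bdd: "bdd_above ((\<lambda>Q. Q s a) ` S)" for s a
    by (rule bdd_aboveI[of _ hi]) (auto simp: S_def box_def)
  define L where "L = (\<lambda>s a. SUP Q\<in>S. Q s a)"
  have upper: "Q s a \<le> L s a" if "Q \<in> S" for Q s a
    unfolding L_def by (rule cSUP_upper[OF that bdd])
  have Lbox: "L \<in> box"
  proof -
    have "- hi \<le> L s a \<and> L s a \<le> hi" for s a
    proof
      show "- hi \<le> L s a" using upper[OF lo_in, of s a] by simp
      show "L s a \<le> hi" unfolding L_def by (rule cSUP_least[OF Sne]) (auto simp: S_def box_def)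
    qed
    then show ?thesis unfolding box_def by auto
  qed
  have LT: "L s a \<le> T L s a" for s a
    unfolding L_def
  proof (rule cSUP_least[OF Sne])
    fix Q assume Q: "Q \<in> S"
    then have "Q s a \<le> T Q s a" unfolding S_def by auto
    also have "\<dots> \<le> T L s a" by (rule mono) (rule upper[OF Q])
    finally show "Q s a \<le> T (\<lambda>s a. SUP Q\<in>S. Q s a) s a" unfolding L_def .
  qed
  have "T L \<in> S" unfolding S_def using boxT[OF Lbox] mono[OF LT] by auto
  then have "T L s a \<le> L s a" for s a by (rule upper)
  then have "T L = L" using LT by (intro ext) (simp add: order_antisym)
  then show ?thesis by blast
qed


section \<open>Stage cost\<close>

definition phi :: "real^'b^'a \<Rightarrow> (real^'b \<Rightarrow> real^'b \<Rightarrow> real) \<Rightarrow> real^'a \<Rightarrow> real^'b \<Rightarrow> real^'b \<Rightarrow> real"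
  where "phi R D x q p = - (x \<bullet> (R *v p)) - D p q"

lemma sc_phi: "stage_cost eps nu D R x q = (SUP p\<in>prob_simplex. phi R D x q p) + eps * nu x"
  unfolding stage_cost_def phi_def by simp

lemma phi_cont:
  assumes "continuous_on prob_simplex (\<lambda>p. D p q)"
  shows "continuous_on prob_simplex (phi R D x q)"
proof -
  have "continuous_on prob_simplex (\<lambda>p. x \<bullet> (R *v p))"
    by (intro continuous_intros matrix_vector_mult_linear_continuous_on)
  then show ?thesis unfolding phi_def using assms by (intro continuous_intros)
qed

lemma phi_max:
  fixes R :: "real^'b::finite^'a::finite"
  assumes "continuous_on prob_simplex (\<lambda>p. D p q)"
  shows "\<exists>p0\<in>prob_simplex. \<forall>p\<in>prob_simplex. phi R D x q p \<le> phi R D x q p0"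
  using continuous_attains_sup[OF simplex_compact simplex_nonempty phi_cont[where D=D and q=q, OF assms]] by blast

lemma sc_eq:
  fixes R :: "real^'b::finite^'a::finite"
  assumes "p0 \<in> prob_simplex" "\<forall>p\<in>prob_simplex. phi R D x q p \<le> phi R D x q p0"
  shows "stage_cost eps nu D R x q = phi R D x q p0 + eps * nu x"
proof -
  have "(SUP p\<in>prob_simplex. phi R D x q p) = phi R D x q p0"
    by (rule cSup_eq_maximum) (use assms in auto)
  then show ?thesis by (simp add: sc_phi)
qed

lemma sc_upper:
  fixes R :: "real^'b::finite^'a::finite"
  assumes "continuous_on prob_simplex (\<lambda>p. D p q)" "p \<in> prob_simplex"
  shows "phi R D x q p + eps * nu x \<le> stage_cost eps nu D R x q"
proof -
  obtain p0 where "p0 \<in> prob_simplex" "\<forall>p\<in>prob_simplex. phi R D x q p \<le> phi R D x q p0"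
    using phi_max[where D=D and q=q, OF assms(1)] by blast
  then show ?thesis using sc_eq[of p0 R D x q] assms(2) by auto
qed

lemma inner_mat: "x \<bullet> (R *v p) = (\<Sum>i\<in>UNIV. \<Sum>j\<in>UNIV. x $ i * R $ i $ j * p $ j)"
  unfolding inner_vec_def matrix_vector_mult_def
  by (simp add: sum_distrib_left mult.assoc)

lemma inner_shift:
  fixes R :: "real^'b::finite^'a::finite"
  assumes "x \<in> prob_simplex" "p \<in> prob_simplex"
  shows "x \<bullet> ((R + (\<chi> i j. c)) *v p) = x \<bullet> (R *v p) + c"
proof -
  have "x \<bullet> ((R + (\<chi> i j. c)) *v p) = (\<Sum>i\<in>UNIV. \<Sum>j\<in>UNIV. x $ i * R $ i $ j * p $ j)
      + (\<Sum>i\<in>UNIV. \<Sum>j\<in>UNIV. x $ i * c * p $ j)"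
    unfolding inner_mat by (simp add: ring_distribs sum.distrib)
  also have "(\<Sum>i\<in>UNIV. \<Sum>j\<in>UNIV. x $ i * c * p $ j) = (\<Sum>i\<in>UNIV. x $ i) * c * (\<Sum>j\<in>UNIV. p $ j)"
    by (simp add: sum_distrib_left[symmetric] sum_distrib_right[symmetric])
  also have "\<dots> = c" using assms by (simp add: simplex_sum)
  finally show ?thesis unfolding inner_mat .
qed

lemma sc_shift:
  fixes R :: "real^'b::finite^'a::finite"
  assumes cont: "continuous_on prob_simplex (\<lambda>p. D p q)" and x: "x \<in> prob_simplex"
  shows "stage_cost eps nu D (R + (\<chi> i j. c)) x q = stage_cost eps nu D R x q - c"
proof -
  obtain p0 where p0: "p0 \<in> prob_simplex" "\<forall>p\<in>prob_simplex. phi R D x q p \<le> phi R D x q p0"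
    using phi_max[where D=D and q=q, OF cont] by blast
  have ph: "phi (R + (\<chi> i j. c)) D x q p = phi R D x q p - c" if "p \<in> prob_simplex" for p
    unfolding phi_def using inner_shift[OF x that] by simp
  have "\<forall>p\<in>prob_simplex. phi (R + (\<chi> i j. c)) D x q p \<le> phi (R + (\<chi> i j. c)) D x q p0"
    using p0 ph by auto
  then have "stage_cost eps nu D (R + (\<chi> i j. c)) x q = phi (R + (\<chi> i j. c)) D x q p0 + eps * nu x"
    by (rule sc_eq[OF p0(1)])
  then show ?thesis using sc_eq[OF p0] ph[OF p0(1)] by simp
qed

lemma sc_mono:
  fixes R R' :: "real^'b::finite^'a::finite"
  assumes cont: "continuous_on prob_simplex (\<lambda>p. D p q)" and x: "x \<in> prob_simplex"
    and le: "\<And>i j. R $ i $ j \<le> R' $ i $ j"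
  shows "stage_cost eps nu D R' x q \<le> stage_cost eps nu D R x q"
proof -
  obtain p0 where p0: "p0 \<in> prob_simplex" "\<forall>p\<in>prob_simplex. phi R' D x q p \<le> phi R' D x q p0"
    using phi_max[where D=D and q=q, OF cont] by blast
  have "x \<bullet> (R *v p0) \<le> x \<bullet> (R' *v p0)"
    unfolding inner_mat
    by (intro sum_mono mult_right_mono mult_left_mono le simplex_nonneg x p0(1))
  then have "phi R' D x q p0 \<le> phi R D x q p0" unfolding phi_def by simp
  then have "stage_cost eps nu D R' x q \<le> phi R D x q p0 + eps * nu x"
    using sc_eq[OF p0] by simp
  also have "\<dots> \<le> stage_cost eps nu D R x q" by (rule sc_upper[where D=D and q=q, OF cont p0(1)])
  finally show ?thesis .
qed

section \<open>Robust expectation operator\<close>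

definition Bop :: "(real^'s \<Rightarrow> real^'s \<Rightarrow> real) \<Rightarrow> real^'s \<Rightarrow> ('s::finite \<Rightarrow> real) \<Rightarrow> real" where
  "Bop Denv Pz v = (INF Pt\<in>prob_simplex. (\<Sum>s'\<in>UNIV. Pt $ s' * v s') + Denv Pt Pz)"

lemma Bop_bdd:
  fixes v :: "'s::finite \<Rightarrow> real"
  assumes "\<forall>Pt\<in>prob_simplex. 0 \<le> Denv Pt Pz"
  shows "bdd_below ((\<lambda>Pt. (\<Sum>s'\<in>UNIV. Pt $ s' * v s') + Denv Pt Pz) ` prob_simplex)"
proof (rule bdd_belowI2)
  fix Pt :: "real^'s" assume Pt: "Pt \<in> prob_simplex"
  have "(\<Sum>s'\<in>UNIV. Pt $ s' * Min (range v)) \<le> (\<Sum>s'\<in>UNIV. Pt $ s' * v s')"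
    by (intro sum_mono mult_left_mono simplex_nonneg[OF Pt]) simp
  moreover have "(\<Sum>s'\<in>UNIV. Pt $ s' * Min (range v)) = Min (range v)"
    using simplex_sum[OF Pt] by (simp add: sum_distrib_right[symmetric])
  ultimately show "Min (range v) \<le> (\<Sum>s'\<in>UNIV. Pt $ s' * v s') + Denv Pt Pz"
    using assms Pt by fastforce
qed

lemma Bop_mono:
  fixes v w :: "'s::finite \<Rightarrow> real"
  assumes "\<forall>Pt\<in>prob_simplex. 0 \<le> Denv Pt Pz" "\<And>s. v s \<le> w s"
  shows "Bop Denv Pz v \<le> Bop Denv Pz w"
  unfolding Bop_def
proof (rule cINF_mono[OF simplex_nonempty Bop_bdd[where Denv=Denv and Pz=Pz, OF assms(1)]])
  fix Pt :: "real^'s" assume Pt: "Pt \<in> prob_simplex"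
  have "(\<Sum>s'\<in>UNIV. Pt $ s' * v s') \<le> (\<Sum>s'\<in>UNIV. Pt $ s' * w s')"
    by (intro sum_mono mult_left_mono simplex_nonneg[OF Pt] assms(2))
  then show "\<exists>n\<in>prob_simplex. (\<Sum>s'\<in>UNIV. n $ s' * v s') + Denv n Pz \<le> (\<Sum>s'\<in>UNIV. Pt $ s' * w s') + Denv Pt Pz"
    using Pt by (intro bexI[of _ Pt]) auto
qed

lemma INF_shift:
  fixes f :: "'a \<Rightarrow> real"
  assumes "A \<noteq> {}" "bdd_below (f ` A)"
  shows "(INF x\<in>A. f x + c) = (INF x\<in>A. f x) + c"
proof (rule order_antisym)
  have bdd2: "bdd_below ((\<lambda>x. f x + c) ` A)"
    using assms(2) unfolding bdd_below_def by (auto intro: add_right_mono)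
  show "(INF x\<in>A. f x) + c \<le> (INF x\<in>A. f x + c)"
    using cINF_greatest[OF assms(1), of "(INF x\<in>A. f x) + c" "\<lambda>x. f x + c"]
      cINF_lower[OF assms(2)] by simp
  have "(INF x\<in>A. f x + c) - c \<le> (INF x\<in>A. f x)"
    by (rule cINF_greatest[OF assms(1)]) (use cINF_lower[OF bdd2] in \<open>fastforce\<close>)
  then show "(INF x\<in>A. f x + c) \<le> (INF x\<in>A. f x) + c" by simp
qed

lemma Bop_shift:
  fixes v :: "'s::finite \<Rightarrow> real"
  assumes "\<forall>Pt\<in>prob_simplex. 0 \<le> Denv Pt Pz"
  shows "Bop Denv Pz (\<lambda>s. v s + c) = Bop Denv Pz v + c"
proof -
  have "(\<Sum>s'\<in>UNIV. Pt $ s' * (v s' + c)) + Denv Pt Pz = ((\<Sum>s'\<in>UNIV. Pt $ s' * v s') + Denv Pt Pz) + c"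
    if "Pt \<in> prob_simplex" for Pt :: "real^'s"
    using simplex_sum[OF that] by (simp add: ring_distribs sum.distrib sum_distrib_right[symmetric])
  then have "Bop Denv Pz (\<lambda>s. v s + c) = (INF Pt\<in>prob_simplex. ((\<Sum>s'\<in>UNIV. Pt $ s' * v s') + Denv Pt Pz) + c)"
    unfolding Bop_def by (intro INF_cong) auto
  also have "\<dots> = Bop Denv Pz v + c"
    unfolding Bop_def by (rule INF_shift[OF simplex_nonempty Bop_bdd[where Denv=Denv and Pz=Pz, OF assms]])
  finally show ?thesis .
qed


section \<open>Policy evaluation operator\<close>

definition Top :: "real \<Rightarrow> ('s::finite \<Rightarrow> 'c \<Rightarrow> real) \<Rightarrow> ('s \<Rightarrow> 'c \<Rightarrow> real^'s)
    \<Rightarrow> (real^'s \<Rightarrow> real^'s \<Rightarrow> real) \<Rightarrow> (('s \<Rightarrow> 'c \<Rightarrow> real) \<Rightarrow> 's \<Rightarrow> 'm)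
    \<Rightarrow> ('m \<Rightarrow> 'x \<Rightarrow> 'y \<Rightarrow> real) \<Rightarrow> ('s \<Rightarrow> 'x) \<Rightarrow> ('s \<Rightarrow> 'y) \<Rightarrow> ('s \<Rightarrow> 'c \<Rightarrow> real) \<Rightarrow> ('s \<Rightarrow> 'c \<Rightarrow> real)"
  where "Top gamma r P Denv M f pii pimi Q =
    (\<lambda>s a. r s a + gamma * Bop Denv (P s a) (\<lambda>s'. - f (M Q s') (pii s') (pimi s')))"

lemma Top_mono:
  fixes M :: "('s::finite \<Rightarrow> 'c::finite \<Rightarrow> real) \<Rightarrow> 's \<Rightarrow> real^'b::finite^'a::finite"
    and pii :: "'s \<Rightarrow> real^'a" and pimi :: "'s \<Rightarrow> real^'b"
  assumes Denv: "\<And>s a. \<forall>Pt\<in>prob_simplex. 0 \<le> Denv Pt (P s a)"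
    and g: "0 \<le> gamma"
    and cont: "\<forall>q\<in>prob_simplex. continuous_on prob_simplex (\<lambda>p. D p q)"
    and pii: "\<And>s. pii s \<in> prob_simplex" and pimi: "\<And>s. pimi s \<in> prob_simplex"
    and Mmono: "\<And>Q Q' s i j. (\<And>s a. Q s a \<le> Q' s a) \<Longrightarrow> M Q s $ i $ j \<le> M Q' s $ i $ j"
    and le: "\<And>s a. Q s a \<le> Q' s a"
  shows "Top gamma r P Denv M (stage_cost eps nu D) pii pimi Q s a \<le> Top gamma r P Denv M (stage_cost eps nu D) pii pimi Q' s a"
proof -
  have "- stage_cost eps nu D (M Q s') (pii s') (pimi s') \<le> - stage_cost eps nu D (M Q' s') (pii s') (pimi s')" for s'
    using sc_mono[where D=D and q="pimi s'", OF bspec[OF cont pimi] pii, of "M Q s'" "M Q' s'" eps nu] Mmono[OF le]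
    by simp
  then have "Bop Denv (P s a) (\<lambda>s'. - stage_cost eps nu D (M Q s') (pii s') (pimi s'))
      \<le> Bop Denv (P s a) (\<lambda>s'. - stage_cost eps nu D (M Q' s') (pii s') (pimi s'))"
    by (intro Bop_mono Denv)
  then show ?thesis
    unfolding Top_def using g by (simp add: mult_left_mono)
qed

lemma Top_shift:
  fixes M :: "('s::finite \<Rightarrow> 'c::finite \<Rightarrow> real) \<Rightarrow> 's \<Rightarrow> real^'b::finite^'a::finite"
    and pii :: "'s \<Rightarrow> real^'a" and pimi :: "'s \<Rightarrow> real^'b"
  assumes Denv: "\<And>s a. \<forall>Pt\<in>prob_simplex. 0 \<le> Denv Pt (P s a)"
    and cont: "\<forall>q\<in>prob_simplex. continuous_on prob_simplex (\<lambda>p. D p q)"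
    and pii: "\<And>s. pii s \<in> prob_simplex" and pimi: "\<And>s. pimi s \<in> prob_simplex"
    and Mshift: "\<And>Q c s. M (\<lambda>s a. Q s a + c) s = M Q s + (\<chi> i j. c)"
  shows "Top gamma r P Denv M (stage_cost eps nu D) pii pimi (\<lambda>s a. Q s a + c) s a
      = Top gamma r P Denv M (stage_cost eps nu D) pii pimi Q s a + gamma * c"
proof -
  define v where "v = (\<lambda>s'. - stage_cost eps nu D (M Q s') (pii s') (pimi s'))"
  have hv: "(\<lambda>s'. - stage_cost eps nu D (M (\<lambda>s a. Q s a + c) s') (pii s') (pimi s'))
      = (\<lambda>s'. v s' + c)"
    unfolding v_def
    using sc_shift[where D=D and q="pimi s'" for s', OF bspec[OF cont pimi] pii] by (simp add: Mshift)
  have "Bop Denv (P s a) (\<lambda>s'. v s' + c) = Bop Denv (P s a) v + c"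
    by (rule Bop_shift[where Denv=Denv and Pz="P s a", OF Denv])
  then show ?thesis
    unfolding Top_def hv by (simp add: v_def[symmetric] ring_distribs)
qed

lemma polQ_eq:
  fixes M :: "('s::finite \<Rightarrow> ('a1::finite \<times> 'a2::finite) \<Rightarrow> real) \<Rightarrow> 's \<Rightarrow> real^'b::finite^'a::finite"
    and pii :: "'s \<Rightarrow> real^'a" and pimi :: "'s \<Rightarrow> real^'b"
  assumes Denv: "\<And>s a. \<forall>Pt\<in>prob_simplex. 0 \<le> Denv Pt (P s a)"
    and g: "0 \<le> gamma" "gamma < 1"
    and cont: "\<forall>q\<in>prob_simplex. continuous_on prob_simplex (\<lambda>p. D p q)"
    and pii: "\<And>s. pii s \<in> prob_simplex" and pimi: "\<And>s. pimi s \<in> prob_simplex"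
    and Mshift: "\<And>Q c s. M (\<lambda>s a. Q s a + c) s = M Q s + (\<chi> i j. c)"
    and Mmono: "\<And>Q Q' s i j. (\<And>s a. Q s a \<le> Q' s a) \<Longrightarrow> M Q s $ i $ j \<le> M Q' s $ i $ j"
    and fp: "Top gamma r P Denv M (stage_cost eps nu D) pii pimi Q0 = Q0"
  shows "polQ gamma r P Denv M (stage_cost eps nu D) pii pimi = Q0"
proof -
  let ?T = "Top gamma r P Denv M (stage_cost eps nu D) pii pimi"
  have mono: "\<And>Q Q' s a. (\<And>s a. Q s a \<le> Q' s a) \<Longrightarrow> ?T Q s a \<le> ?T Q' s a"
    by (rule Top_mono[where M=M and D=D and Denv=Denv and P=P and pii="pii" and pimi=pimi and gamma=gamma, OF Denv g(1) cont pii pimi Mmono])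
  have shift: "\<And>Q c s a. ?T (\<lambda>s a. Q s a + c) s a = ?T Q s a + gamma * c"
    by (rule Top_shift[where M=M and D=D and Denv=Denv and P=P and pii="pii" and pimi=pimi and gamma=gamma, OF Denv cont pii pimi Mshift])
  note props = mono shift
  have eq: "(\<forall>s a. Q s a = r s a + gamma * (INF Pt\<in>prob_simplex. (\<Sum>s'\<in>UNIV. Pt $ s' *
      (- stage_cost eps nu D (M Q s') (pii s') (pimi s'))) + Denv Pt (P s a)))
     \<longleftrightarrow> Top gamma r P Denv M (stage_cost eps nu D) pii pimi Q = Q" for Q
    unfolding Top_def Bop_def by (auto simp: fun_eq_iff)
  show ?thesis unfolding polQ_def
  proof (rule the_equality)
    show "\<forall>s a. Q0 s a = r s a + gamma * (INF Pt\<in>prob_simplex. (\<Sum>s'\<in>UNIV. Pt $ s' *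
      (- stage_cost eps nu D (M Q0 s') (pii s') (pimi s'))) + Denv Pt (P s a))"
      using eq fp by blast
  next
    fix Q assume "\<forall>s a. Q s a = r s a + gamma * (INF Pt\<in>prob_simplex. (\<Sum>s'\<in>UNIV. Pt $ s' *
      (- stage_cost eps nu D (M Q s') (pii s') (pimi s'))) + Denv Pt (P s a))"
    then have fQ: "Top gamma r P Denv M (stage_cost eps nu D) pii pimi Q = Q" using eq by blast
    have "Q s a \<le> Q0 s a" for s a
    proof (rule fp_compare[where T="?T", OF props g fQ])
      fix s a show "?T Q0 s a \<le> Q0 s a" using fp by simp
    qed
    moreover have "Q0 s a \<le> Q s a" for s a
    proof (rule fp_compare[where T="?T", OF props g fp])
      fix s a show "?T Q s a \<le> Q s a" using fQ by simp
    qed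
    ultimately show "Q = Q0" by (intro ext order_antisym)
  qed
qed

lemma player_opt:
  fixes M :: "('s::finite \<Rightarrow> ('a1::finite \<times> 'a2::finite) \<Rightarrow> real) \<Rightarrow> 's \<Rightarrow> real^'b::finite^'a::finite"
    and pii pii' :: "'s \<Rightarrow> real^'a" and pimi :: "'s \<Rightarrow> real^'b"
  assumes Denv: "\<And>s a. \<forall>Pt\<in>prob_simplex. 0 \<le> Denv Pt (P s a)"
    and g: "0 \<le> gamma" "gamma < 1"
    and cont: "\<forall>q\<in>prob_simplex. continuous_on prob_simplex (\<lambda>p. D p q)"
    and pii: "\<And>s. pii s \<in> prob_simplex" and pii': "\<And>s. pii' s \<in> prob_simplex"
    and pimi: "\<And>s. pimi s \<in> prob_simplex"
    and Mshift: "\<And>Q c s. M (\<lambda>s a. Q s a + c) s = M Q s + (\<chi> i j. c)"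
    and Mmono: "\<And>Q Q' s i j. (\<And>s a. Q s a \<le> Q' s a) \<Longrightarrow> M Q s $ i $ j \<le> M Q' s $ i $ j"
    and fp: "Top gamma r P Denv M (stage_cost eps nu D) pii pimi Q = Q"
    and best: "\<And>s y. y \<in> prob_simplex \<Longrightarrow>
       stage_cost eps nu D (M Q s) (pii s) (pimi s) \<le> stage_cost eps nu D (M Q s) y (pimi s)"
  shows "polV gamma r P Denv M (stage_cost eps nu D) pii' pimi s \<le> polV gamma r P Denv M (stage_cost eps nu D) pii pimi s"
proof -
  let ?T = "Top gamma r P Denv M (stage_cost eps nu D) pii' pimi"
  have mono: "\<And>Q Q' s a. (\<And>s a. Q s a \<le> Q' s a) \<Longrightarrow> ?T Q s a \<le> ?T Q' s a"
    by (rule Top_mono[where M=M and D=D and Denv=Denv and P=P and pii="pii'" and pimi=pimi and gamma=gamma, OF Denv g(1) cont pii' pimi Mmono])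
  have shift: "\<And>Q c s a. ?T (\<lambda>s a. Q s a + c) s a = ?T Q s a + gamma * c"
    by (rule Top_shift[where M=M and D=D and Denv=Denv and P=P and pii="pii'" and pimi=pimi and gamma=gamma, OF Denv cont pii' pimi Mshift])
  note props = mono shift
  obtain Q' where Q': "?T Q' = Q'" using fp_exists[where T="?T", OF props g] by blast
  have pQ': "polQ gamma r P Denv M (stage_cost eps nu D) pii' pimi = Q'"
    by (rule polQ_eq[OF Denv g cont pii' pimi Mshift Mmono Q'])
  have pQ: "polQ gamma r P Denv M (stage_cost eps nu D) pii pimi = Q"
    by (rule polQ_eq[OF Denv g cont pii pimi Mshift Mmono fp])
  have "?T Q s a \<le> Q s a" for s a
  proof -
    have "Bop Denv (P s a) (\<lambda>s'. - stage_cost eps nu D (M Q s') (pii' s') (pimi s'))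
      \<le> Bop Denv (P s a) (\<lambda>s'. - stage_cost eps nu D (M Q s') (pii s') (pimi s'))"
      by (intro Bop_mono Denv) (simp add: best pii')
    then have "?T Q s a \<le> Top gamma r P Denv M (stage_cost eps nu D) pii pimi Q s a"
      unfolding Top_def using g by (simp add: mult_left_mono)
    then show ?thesis using fp by simp
  qed
  note TQ = this
  have le: "Q' s a \<le> Q s a" for s a using fp_compare[where T="?T", OF props g Q' TQ] by simp
  have "- stage_cost eps nu D (M Q' s) (pii' s) (pimi s) \<le> - stage_cost eps nu D (M Q s) (pii' s) (pimi s)"
    using sc_mono[where D=D and q="pimi s", OF bspec[OF cont pimi] pii', of "M Q' s" "M Q s" eps nu] Mmono[OF le]
    by simp
  also have "\<dots> \<le> - stage_cost eps nu D (M Q s) (pii s) (pimi s)" using best[OF pii'] by simp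
  finally show ?thesis unfolding polV_def pQ pQ' .
qed

lemma mat1_shift: "mat1 (\<lambda>s a. Q s a + c) s = mat1 Q s + (\<chi> i j. c)"
  and mat2_shift: "mat2 (\<lambda>s a. Q s a + c) s = mat2 Q s + (\<chi> i j. c)"
  unfolding mat1_def mat2_def by (simp_all add: vec_eq_iff)

lemma mat1_mono: "(\<And>s a. Q s a \<le> Q' s a) \<Longrightarrow> mat1 Q s $ i $ j \<le> mat1 Q' s $ i $ j"
  and mat2_mono: "(\<And>s a. Q s a \<le> Q' s a) \<Longrightarrow> mat2 Q s $ i $ j \<le> mat2 Q' s $ i $ j"
  unfolding mat1_def mat2_def by simp_all


section \<open>First order conditions\<close>

lemma inner_transpose:
  fixes R :: "real^'b::finite^'a::finite"
  shows "x \<bullet> (R *v v) = (transpose R *v x) \<bullet> v"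
proof -
  have "(transpose R *v x) \<bullet> v = (\<Sum>i\<in>UNIV. \<Sum>j\<in>UNIV. x $ j * R $ j $ i * v $ i)"
    unfolding inner_vec_def matrix_vector_mult_def transpose_def
    by (simp add: sum_distrib_left mult_ac)
  also have "\<dots> = (\<Sum>j\<in>UNIV. \<Sum>i\<in>UNIV. x $ j * R $ j $ i * v $ i)"
    by (rule sum.swap)
  finally show ?thesis unfolding inner_mat by simp
qed

lemma dir_deriv:
  fixes f :: "'a::real_inner \<Rightarrow> real"
  assumes "(f has_derivative (\<lambda>h. g \<bullet> h)) (at z)"
  shows "((\<lambda>t. f (z + t *\<^sub>R v)) has_real_derivative (g \<bullet> v)) (at 0)"
proof -
  have l: "((\<lambda>t::real. z + t *\<^sub>R v) has_derivative (\<lambda>h. h *\<^sub>R v)) (at 0)"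
    by (auto intro!: derivative_eq_intros)
  have "(f \<circ> (\<lambda>t::real. z + t *\<^sub>R v) has_derivative (\<lambda>h. g \<bullet> h) \<circ> (\<lambda>h. h *\<^sub>R v)) (at 0)"
    by (rule diff_chain_at[OF l]) (simp add: assms)
  moreover have "(\<lambda>h. g \<bullet> h) \<circ> (\<lambda>h. h *\<^sub>R v) = (*) (g \<bullet> v)"
    by (auto simp: fun_eq_iff)
  ultimately show ?thesis unfolding has_field_derivative_def by (simp add: o_def)
qed

lemma simplex_seg:
  assumes "p \<in> prob_simplex" "p' \<in> prob_simplex" "0 \<le> h" "h \<le> 1"
  shows "p + h *\<^sub>R (p' - p) \<in> prob_simplex"
proof -
  have "p + h *\<^sub>R (p' - p) = (1 - h) *\<^sub>R p + h *\<^sub>R p'" by (simp add: algebra_simps)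
  then show ?thesis using simplex_convex[unfolded convex_def, rule_format, of p p' "1-h" h] assms by simp
qed

lemma first_order:
  fixes R :: "real^'b::finite^'a::finite" and x :: "real^'a" and p p' q :: "real^'b"
  assumes p: "p \<in> prob_simplex" and p': "p' \<in> prob_simplex"
    and max: "\<forall>p''\<in>prob_simplex. phi R D x q p'' \<le> phi R D x q p"
    and dD: "((\<lambda>p'. D p' q) has_derivative (\<lambda>h. gD p q \<bullet> h)) (at p)"
  shows "0 \<le> (p' - p) \<bullet> (transpose R *v x + gD p q)"
proof -
  define v where "v = p' - p"
  define L where "L = - (x \<bullet> (R *v v)) - gD p q \<bullet> v"
  define g where "g = (\<lambda>t. phi R D x q (p + t *\<^sub>R v))"
  have geq: "g = (\<lambda>t. - (x \<bullet> (R *v p)) - t * (x \<bullet> (R *v v)) - D (p + t *\<^sub>R v) q)"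
    unfolding g_def phi_def
    by (simp add: fun_eq_iff matrix_vector_right_distrib matrix_vector_mult_scaleR inner_add_right)
  have dd: "((\<lambda>t. D (p + t *\<^sub>R v) q) has_real_derivative (gD p q \<bullet> v)) (at 0)"
    by (rule dir_deriv[OF dD])
  have der: "(g has_real_derivative L) (at 0)"
    unfolding geq L_def
    by (auto intro!: derivative_eq_intros dd)
  have "L \<le> 0"
  proof (rule ccontr)
    assume "\<not> L \<le> 0"
    then obtain d where d: "d > 0" "\<forall>h>0. h < d \<longrightarrow> g 0 < g (0 + h)"
      using DERIV_pos_inc_right[OF der] by force
    define h where "h = min (d/2) 1"
    have h: "0 < h" "h < d" "h \<le> 1" using d unfolding h_def by auto
    have "g 0 < g h" using d h by auto
    moreover have "p + h *\<^sub>R v \<in> prob_simplex" unfolding v_def by (rule simplex_seg) (use p p' h in auto)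
    then have "g h \<le> g 0" unfolding g_def using max by simp
    ultimately show False by simp
  qed
  moreover have "(p' - p) \<bullet> (transpose R *v x + gD p q) = - L"
    unfolding L_def v_def by (simp add: inner_add_right inner_transpose inner_commute)
  ultimately show ?thesis by simp
qed

lemma mono_pair:
  fixes a b u v :: "'a::real_inner"
  assumes "0 \<le> (b - a) \<bullet> u" "0 \<le> (a - b) \<bullet> v"
  shows "(a - b) \<bullet> (u - v) \<le> 0"
proof -
  have "(a - b) \<bullet> (u - v) = - ((b - a) \<bullet> u) - (a - b) \<bullet> v"
    by (simp add: inner_diff_left inner_diff_right)
  then show ?thesis using assms by simp
qed


lemma danskin:
  fixes R :: "real^'b::finite^'a::finite" and x y :: "real^'a" and q :: "real^'b"
  assumes x: "x \<in> prob_simplex" and y: "y \<in> prob_simplex"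
    and cont: "continuous_on prob_simplex (\<lambda>p. D p q)"
    and dnu: "(nu has_derivative (\<lambda>h. gnu x \<bullet> h)) (at x)"
    and opt: "\<forall>z\<in>prob_simplex. stage_cost eps nu D R x q \<le> stage_cost eps nu D R z q"
  shows "\<exists>p\<in>prob_simplex. (\<forall>p'\<in>prob_simplex. phi R D x q p' \<le> phi R D x q p)
            \<and> 0 \<le> (y - x) \<bullet> (- (R *v p) + eps *\<^sub>R gnu x)"
proof -
  define d where "d = y - x"
  define t where "t = (\<lambda>n::nat. inverse (real (Suc n)))"
  have t: "0 < t n" "t n \<le> 1" for n unfolding t_def by (auto simp: field_simps)
  define xs where "xs = (\<lambda>n. x + t n *\<^sub>R d)"
  have xs: "xs n \<in> prob_simplex" for n
    unfolding xs_def d_def by (rule simplex_seg[OF x y]) (use t[of n] in auto)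
  have "\<forall>n. \<exists>p. p \<in> prob_simplex \<and> (\<forall>p'\<in>prob_simplex. phi R D (xs n) q p' \<le> phi R D (xs n) q p)"
    using phi_max[where D=D and q=q, OF cont] by blast
  then obtain p where p: "\<And>n. p n \<in> prob_simplex"
      "\<And>n p'. p' \<in> prob_simplex \<Longrightarrow> phi R D (xs n) q p' \<le> phi R D (xs n) q (p n)"
    by metis
  have ineq: "0 \<le> - (d \<bullet> (R *v p n)) + eps * ((nu (x + t n *\<^sub>R d) - nu x) / t n)" for n
  proof -
    have "stage_cost eps nu D R x q \<le> stage_cost eps nu D R (xs n) q" using opt xs by blast
    also have "\<dots> = phi R D (xs n) q (p n) + eps * nu (xs n)" by (rule sc_eq) (use p in auto)
    finally have 1: "phi R D x q (p n) + eps * nu x \<le> phi R D (xs n) q (p n) + eps * nu (xs n)"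
      using sc_upper[where D=D and q=q and R=R and x=x and eps=eps and nu=nu and p="p n", OF cont p(1)] by linarith
    have 2: "phi R D (xs n) q (p n) = phi R D x q (p n) - t n * (d \<bullet> (R *v p n))"
      unfolding phi_def xs_def by (simp add: inner_add_left)
    have "0 \<le> t n * (- (d \<bullet> (R *v p n))) + eps * (nu (x + t n *\<^sub>R d) - nu x)"
      using 1 2 unfolding xs_def by (simp add: algebra_simps)
    then have "0 \<le> (t n * (- (d \<bullet> (R *v p n))) + eps * (nu (x + t n *\<^sub>R d) - nu x)) / t n"
      using t[of n] by simp
    also have "\<dots> = - (d \<bullet> (R *v p n)) + eps * ((nu (x + t n *\<^sub>R d) - nu x) / t n)"
      using t[of n] by (simp add: field_simps)
    finally show ?thesis .
  qed
  obtain l r where l: "l \<in> prob_simplex" and r: "strict_mono r" and lim: "(p \<circ> r) \<longlonglongrightarrow> l"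
    using compact_imp_seq_compact[OF simplex_compact] p(1) unfolding seq_compact_def by metis
  have t0: "t \<longlonglongrightarrow> 0" unfolding t_def by (rule LIMSEQ_inverse_real_of_nat)
  have tr0: "(\<lambda>n. t (r n)) \<longlonglongrightarrow> 0" using LIMSEQ_subseq_LIMSEQ[OF t0 r] by (simp add: o_def)
  define X where "X = (\<lambda>s. (nu (x + s *\<^sub>R d) - nu x) / s)"
  have dq: "(X \<longlongrightarrow> gnu x \<bullet> d) (at 0)"
    using dir_deriv[OF dnu, of d] unfolding has_field_derivative_iff X_def by simp
  have dqr: "(\<lambda>n. X (t (r n))) \<longlonglongrightarrow> gnu x \<bullet> d"
    using dq tr0 t(1) unfolding LIMSEQ_SEQ_conv[symmetric] by (metis less_irrefl)
  have lp: "(\<lambda>n. p (r n)) \<longlonglongrightarrow> l" using lim by (simp add: o_def)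
  have Rl: "(\<lambda>n. R *v p (r n)) \<longlonglongrightarrow> R *v l"
    by (rule bounded_linear.tendsto[OF matrix_vector_mul_bounded_linear lp])
  have lin: "(\<lambda>n. d \<bullet> (R *v p (r n))) \<longlonglongrightarrow> d \<bullet> (R *v l)"
    by (intro tendsto_intros Rl)
  have A: "0 \<le> - (d \<bullet> (R *v l)) + eps * (gnu x \<bullet> d)"
    by (rule LIMSEQ_le_const[OF tendsto_add[OF tendsto_minus[OF lin] tendsto_mult[OF tendsto_const dqr]]])
      (use ineq in \<open>auto simp: X_def\<close>)
  have B: "phi R D x q p' \<le> phi R D x q l" if p': "p' \<in> prob_simplex" for p'
  proof -
    have xr: "(\<lambda>n. xs (r n)) \<longlonglongrightarrow> x"
      unfolding xs_def using tendsto_add[OF tendsto_const tendsto_scaleR[OF tr0 tendsto_const], of x d] by simp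
    have c1: "(\<lambda>n. phi R D (xs (r n)) q p') \<longlonglongrightarrow> phi R D x q p'"
      unfolding phi_def by (intro tendsto_intros xr)
    have Dl: "(\<lambda>n. D (p (r n)) q) \<longlonglongrightarrow> D l q"
      by (rule continuous_on_tendsto_compose[OF cont lp l]) (use p(1) in auto)
    have c2: "(\<lambda>n. phi R D (xs (r n)) q (p (r n))) \<longlonglongrightarrow> phi R D x q l"
      unfolding phi_def by (intro tendsto_intros xr Dl Rl)
    show ?thesis by (rule LIMSEQ_le[OF c1 c2]) (use p(2)[OF p'] in auto)
  qed
  have "(y - x) \<bullet> (- (R *v l) + eps *\<^sub>R gnu x) = - (d \<bullet> (R *v l)) + eps * (gnu x \<bullet> d)"
    unfolding d_def by (simp add: inner_add_right inner_diff_right inner_commute[of "y - x"])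
  then have "0 \<le> (y - x) \<bullet> (- (R *v l) + eps *\<^sub>R gnu x)" using A by simp
  then show ?thesis using B l by blast
qed


lemma stage_unique:
  fixes G :: "('s::finite, 'a1::finite, 'a2::finite) mgame"
    and gnu1 :: "real^'a1 \<Rightarrow> real^'a1" and gnu2 :: "real^'a2 \<Rightarrow> real^'a2"
    and gD1 :: "real^'a2 \<Rightarrow> real^'a2 \<Rightarrow> real^'a2" and gD2 :: "real^'a1 \<Rightarrow> real^'a1 \<Rightarrow> real^'a1"
    and R1 :: "real^'a2^'a1" and R2 :: "real^'a1^'a2"
  assumes nu1d: "\<forall>x\<in>prob_simplex. (nu1 G has_derivative (\<lambda>h. gnu1 x \<bullet> h)) (at x)"
    and nu2d: "\<forall>x\<in>prob_simplex. (nu2 G has_derivative (\<lambda>h. gnu2 x \<bullet> h)) (at x)"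
    and D1d: "\<forall>p\<in>prob_simplex. \<forall>q\<in>prob_simplex. ((\<lambda>p'. D1 G p' q) has_derivative (\<lambda>h. gD1 p q \<bullet> h)) (at p)"
    and D2d: "\<forall>p\<in>prob_simplex. \<forall>q\<in>prob_simplex. ((\<lambda>p'. D2 G p' q) has_derivative (\<lambda>h. gD2 p q \<bullet> h)) (at p)"
    and cont1: "\<forall>q\<in>prob_simplex. continuous_on prob_simplex (\<lambda>p. D1 G p q)"
    and cont2: "\<forall>q\<in>prob_simplex. continuous_on prob_simplex (\<lambda>p. D2 G p q)"
    and alpha: "alpha > 0" and sm: "strongly_monotone G gnu1 gnu2 gD1 gD2 alpha"
    and X: "is_RQE G R1 R2 x1 x2" and Y: "is_RQE G R1 R2 y1 y2"
  shows "x1 = y1 \<and> x2 = y2"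
proof -
  have x1: "x1 \<in> prob_simplex" and x2: "x2 \<in> prob_simplex"
    and ox1: "\<forall>z\<in>prob_simplex. stage_cost (eps1 G) (nu1 G) (D1 G) R1 x1 x2 \<le> stage_cost (eps1 G) (nu1 G) (D1 G) R1 z x2"
    and ox2: "\<forall>z\<in>prob_simplex. stage_cost (eps2 G) (nu2 G) (D2 G) R2 x2 x1 \<le> stage_cost (eps2 G) (nu2 G) (D2 G) R2 z x1"
    using X unfolding is_RQE_def f1_def f2_def by auto
  have y1: "y1 \<in> prob_simplex" and y2: "y2 \<in> prob_simplex"
    and oy1: "\<forall>z\<in>prob_simplex. stage_cost (eps1 G) (nu1 G) (D1 G) R1 y1 y2 \<le> stage_cost (eps1 G) (nu1 G) (D1 G) R1 z y2"
    and oy2: "\<forall>z\<in>prob_simplex. stage_cost (eps2 G) (nu2 G) (D2 G) R2 y2 y1 \<le> stage_cost (eps2 G) (nu2 G) (D2 G) R2 z y1"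
    using Y unfolding is_RQE_def f1_def f2_def by auto
  obtain p1 where p1: "p1 \<in> prob_simplex" "\<forall>p'\<in>prob_simplex. phi R1 (D1 G) x1 x2 p' \<le> phi R1 (D1 G) x1 x2 p1"
    and a1: "0 \<le> (y1 - x1) \<bullet> (- (R1 *v p1) + eps1 G *\<^sub>R gnu1 x1)"
    using danskin[where D="D1 G" and q=x2 and nu="nu1 G" and gnu=gnu1 and R=R1 and eps="eps1 G",
        OF x1 y1 bspec[OF cont1 x2] bspec[OF nu1d x1] ox1] by blast
  obtain q1 where q1: "q1 \<in> prob_simplex" "\<forall>p'\<in>prob_simplex. phi R1 (D1 G) y1 y2 p' \<le> phi R1 (D1 G) y1 y2 q1"
    and b1: "0 \<le> (x1 - y1) \<bullet> (- (R1 *v q1) + eps1 G *\<^sub>R gnu1 y1)"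
    using danskin[where D="D1 G" and q=y2 and nu="nu1 G" and gnu=gnu1 and R=R1 and eps="eps1 G",
        OF y1 x1 bspec[OF cont1 y2] bspec[OF nu1d y1] oy1] by blast
  obtain p2 where p2: "p2 \<in> prob_simplex" "\<forall>p'\<in>prob_simplex. phi R2 (D2 G) x2 x1 p' \<le> phi R2 (D2 G) x2 x1 p2"
    and a2: "0 \<le> (y2 - x2) \<bullet> (- (R2 *v p2) + eps2 G *\<^sub>R gnu2 x2)"
    using danskin[where D="D2 G" and q=x1 and nu="nu2 G" and gnu=gnu2 and R=R2 and eps="eps2 G",
        OF x2 y2 bspec[OF cont2 x1] bspec[OF nu2d x2] ox2] by blast
  obtain q2 where q2: "q2 \<in> prob_simplex" "\<forall>p'\<in>prob_simplex. phi R2 (D2 G) y2 y1 p' \<le> phi R2 (D2 G) y2 y1 q2"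
    and b2: "0 \<le> (x2 - y2) \<bullet> (- (R2 *v q2) + eps2 G *\<^sub>R gnu2 y2)"
    using danskin[where D="D2 G" and q=y1 and nu="nu2 G" and gnu=gnu2 and R=R2 and eps="eps2 G",
        OF y2 x2 bspec[OF cont2 y1] bspec[OF nu2d y2] oy2] by blast
  have c1: "0 \<le> (q1 - p1) \<bullet> (transpose R1 *v x1 + gD1 p1 x2)"
    by (rule first_order[OF p1(1) q1(1) p1(2)]) (use D1d p1(1) x2 in blast)
  have d1: "0 \<le> (p1 - q1) \<bullet> (transpose R1 *v y1 + gD1 q1 y2)"
    by (rule first_order[OF q1(1) p1(1) q1(2)]) (use D1d q1(1) y2 in blast)
  have c2: "0 \<le> (q2 - p2) \<bullet> (transpose R2 *v x2 + gD2 p2 x1)"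
    by (rule first_order[OF p2(1) q2(1) p2(2)]) (use D2d p2(1) x1 in blast)
  have d2: "0 \<le> (p2 - q2) \<bullet> (transpose R2 *v y2 + gD2 q2 y1)"
    by (rule first_order[OF q2(1) p2(1) q2(2)]) (use D2d q2(1) y1 in blast)
  have e1: "(x1 - y1) \<bullet> ((- (R1 *v p1) + eps1 G *\<^sub>R gnu1 x1) - (- (R1 *v q1) + eps1 G *\<^sub>R gnu1 y1)) \<le> 0"
    by (rule mono_pair[OF a1 b1])
  have e2: "(x2 - y2) \<bullet> ((- (R2 *v p2) + eps2 G *\<^sub>R gnu2 x2) - (- (R2 *v q2) + eps2 G *\<^sub>R gnu2 y2)) \<le> 0"
    by (rule mono_pair[OF a2 b2])
  have e3: "(p1 - q1) \<bullet> ((transpose R1 *v x1 + gD1 p1 x2) - (transpose R1 *v y1 + gD1 q1 y2)) \<le> 0"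
    by (rule mono_pair[OF c1 d1])
  have e4: "(p2 - q2) \<bullet> ((transpose R2 *v x2 + gD2 p2 x1) - (transpose R2 *v y2 + gD2 q2 y1)) \<le> 0"
    by (rule mono_pair[OF c2 d2])
  have S: "alpha * ((norm (x1 - y1))\<^sup>2 + (norm (x2 - y2))\<^sup>2 + (norm (p1 - q1))\<^sup>2 + (norm (p2 - q2))\<^sup>2)
     \<le> (x1 - y1) \<bullet> ((- (R1 *v p1) + eps1 G *\<^sub>R gnu1 x1) - (- (R1 *v q1) + eps1 G *\<^sub>R gnu1 y1))
     + (x2 - y2) \<bullet> ((- (R2 *v p2) + eps2 G *\<^sub>R gnu2 x2) - (- (R2 *v q2) + eps2 G *\<^sub>R gnu2 y2))
     + (p1 - q1) \<bullet> ((transpose R1 *v x1 + gD1 p1 x2) - (transpose R1 *v y1 + gD1 q1 y2))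
     + (p2 - q2) \<bullet> ((transpose R2 *v x2 + gD2 p2 x1) - (transpose R2 *v y2 + gD2 q2 y1))"
    using sm[unfolded strongly_monotone_def, THEN spec[of _ R1], THEN spec[of _ R2]]
      x1 x2 p1(1) p2(1) y1 y2 q1(1) q2(1) by blast
  define N where "N = (norm (x1 - y1))\<^sup>2 + (norm (x2 - y2))\<^sup>2 + (norm (p1 - q1))\<^sup>2 + (norm (p2 - q2))\<^sup>2"
  have "alpha * N \<le> 0" using S e1 e2 e3 e4 unfolding N_def by linarith
  then have "N \<le> 0" using alpha by (simp add: mult_le_0_iff)
  then have "(norm (x1 - y1))\<^sup>2 \<le> 0" "(norm (x2 - y2))\<^sup>2 \<le> 0" unfolding N_def
    by (smt (verit) zero_le_power2)+
  then show ?thesis by simp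
qed

theorem proposition3:
  fixes G :: "('s::finite, 'a1::finite, 'a2::finite) mgame"
    and gnu1 :: "real^'a1 \<Rightarrow> real^'a1" and gnu2 :: "real^'a2 \<Rightarrow> real^'a2"
    and gD1 :: "real^'a2 \<Rightarrow> real^'a2 \<Rightarrow> real^'a2" and gD2 :: "real^'a1 \<Rightarrow> real^'a1 \<Rightarrow> real^'a1"
    and U1 :: "(real^'a1) set" and U2 :: "(real^'a2) set"
    and W1 :: "((real^'a2) \<times> (real^'a2)) set" and W2 :: "((real^'a1) \<times> (real^'a1)) set"
    and alpha :: real
    and Qs :: "('s \<Rightarrow> 'a1 \<times> 'a2 \<Rightarrow> real) \<times> ('s \<Rightarrow> 'a1 \<times> 'a2 \<Rightarrow> real)"
    and pi1 :: "'s \<Rightarrow> real^'a1" and pi2 :: "'s \<Rightarrow> real^'a2"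
  assumes rew1: "\<forall>s a. 0 \<le> rew1 G s a \<and> rew1 G s a \<le> 1"
    and rew2: "\<forall>s a. 0 \<le> rew2 G s a \<and> rew2 G s a \<le> 1"
    and disc: "0 \<le> disc G" "disc G < 1"
    and trans: "\<forall>s a. trans G s a \<in> prob_simplex"
    and eps: "eps1 G > 0" "eps2 G > 0"
    and nu1: "open U1" "prob_simplex \<subseteq> U1" "strictly_convex_on U1 (nu1 G)"
             "\<forall>x\<in>U1. (nu1 G has_derivative (\<lambda>h. gnu1 x \<bullet> h)) (at x)"
    and nu2: "open U2" "prob_simplex \<subseteq> U2" "strictly_convex_on U2 (nu2 G)"
             "\<forall>x\<in>U2. (nu2 G has_derivative (\<lambda>h. gnu2 x \<bullet> h)) (at x)"
    and D1: "open W1" "prob_simplex \<times> prob_simplex \<subseteq> W1"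
            "\<forall>z\<in>W1. (\<lambda>(p, q). D1 G p q) differentiable (at z)"
            "\<forall>(p, q)\<in>W1. ((\<lambda>p'. D1 G p' q) has_derivative (\<lambda>h. gD1 p q \<bullet> h)) (at p)"
            "\<forall>q\<in>prob_simplex. convex_on prob_simplex (\<lambda>p. D1 G p q)"
    and D2: "open W2" "prob_simplex \<times> prob_simplex \<subseteq> W2"
            "\<forall>z\<in>W2. (\<lambda>(p, q). D2 G p q) differentiable (at z)"
            "\<forall>(p, q)\<in>W2. ((\<lambda>p'. D2 G p' q) has_derivative (\<lambda>h. gD2 p q \<bullet> h)) (at p)"
            "\<forall>q\<in>prob_simplex. convex_on prob_simplex (\<lambda>p. D2 G p q)"
    and Denv: "\<forall>P\<in>prob_simplex. \<forall>P'\<in>prob_simplex. 0 \<le> Denv1 G P P' \<and> 0 \<le> Denv2 G P P'"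
    and mono: "alpha > 0" "strongly_monotone G gnu1 gnu2 gD1 gD2 alpha"
    and fixpt: "bellman G Qs = Qs"
    and fixpt_unique: "\<forall>Q. bellman G Q = Q \<longrightarrow> Q = Qs"
    and pistar: "\<forall>s. is_RQE G (mat1 (fst Qs) s) (mat2 (snd Qs) s) (pi1 s) (pi2 s)"
  shows "is_markov_RQE G pi1 pi2"
proof -
  obtain Q1 Q2 where Qs: "Qs = (Q1, Q2)" by fastforce
  have D1d: "\<forall>p\<in>prob_simplex. \<forall>q\<in>prob_simplex. ((\<lambda>p'. D1 G p' q) has_derivative (\<lambda>h. gD1 p q \<bullet> h)) (at p)"
    using D1(2,4) by blast
  have D2d: "\<forall>p\<in>prob_simplex. \<forall>q\<in>prob_simplex. ((\<lambda>p'. D2 G p' q) has_derivative (\<lambda>h. gD2 p q \<bullet> h)) (at p)"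
    using D2(2,4) by blast
  have cont1: "\<forall>q\<in>prob_simplex. continuous_on prob_simplex (\<lambda>p. D1 G p q)"
    using D1d by (meson continuous_at_imp_continuous_on has_derivative_continuous)
  have cont2: "\<forall>q\<in>prob_simplex. continuous_on prob_simplex (\<lambda>p. D2 G p q)"
    using D2d by (meson continuous_at_imp_continuous_on has_derivative_continuous)
  have nu1d: "\<forall>x\<in>prob_simplex. (nu1 G has_derivative (\<lambda>h. gnu1 x \<bullet> h)) (at x)"
    using nu1(2,4) by blast
  have nu2d: "\<forall>x\<in>prob_simplex. (nu2 G has_derivative (\<lambda>h. gnu2 x \<bullet> h)) (at x)"
    using nu2(2,4) by blast
  have thepair: "(THE x. is_RQE G (mat1 Q1 s) (mat2 Q2 s) (fst x) (snd x)) = (pi1 s, pi2 s)" for s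
  proof (rule the_equality)
    show "is_RQE G (mat1 Q1 s) (mat2 Q2 s) (fst (pi1 s, pi2 s)) (snd (pi1 s, pi2 s))"
      using pistar Qs by simp
  next
    fix x assume xr: "is_RQE G (mat1 Q1 s) (mat2 Q2 s) (fst x) (snd x)"
    have pr: "is_RQE G (mat1 Q1 s) (mat2 Q2 s) (pi1 s) (pi2 s)" using pistar Qs by simp
    have "fst x = pi1 s \<and> snd x = pi2 s"
      by (rule stage_unique[OF nu1d nu2d D1d D2d cont1 cont2 mono(1) mono(2) xr pr])
    then show "x = (pi1 s, pi2 s)" by (simp add: prod_eq_iff)
  qed
  have rqe1: "RQE1 G (mat1 Q1 s) (mat2 Q2 s) = f1 G (mat1 Q1 s) (pi1 s) (pi2 s)" for s
    unfolding RQE1_def thepair by simp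
  have rqe2: "RQE2 G (mat1 Q1 s) (mat2 Q2 s) = f2 G (mat2 Q2 s) (pi2 s) (pi1 s)" for s
    unfolding RQE2_def thepair by simp
  have fp1: "Top (disc G) (rew1 G) (trans G) (Denv1 G) mat1 (stage_cost (eps1 G) (nu1 G) (D1 G)) pi1 pi2 Q1 = Q1"
  proof -
    have "Top (disc G) (rew1 G) (trans G) (Denv1 G) mat1 (stage_cost (eps1 G) (nu1 G) (D1 G)) pi1 pi2 Q1
        = fst (bellman G Qs)"
      unfolding Top_def Bop_def bellman_def Qs by (simp add: rqe1 f1_def sum_negf)
    then show ?thesis using fixpt Qs by simp
  qed
  have fp2: "Top (disc G) (rew2 G) (trans G) (Denv2 G) mat2 (stage_cost (eps2 G) (nu2 G) (D2 G)) pi2 pi1 Q2 = Q2"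
  proof -
    have "Top (disc G) (rew2 G) (trans G) (Denv2 G) mat2 (stage_cost (eps2 G) (nu2 G) (D2 G)) pi2 pi1 Q2
        = snd (bellman G Qs)"
      unfolding Top_def Bop_def bellman_def Qs by (simp add: rqe2 f2_def sum_negf)
    then show ?thesis using fixpt Qs by simp
  qed
  have pi1s: "\<And>s. pi1 s \<in> prob_simplex" and pi2s: "\<And>s. pi2 s \<in> prob_simplex"
    using pistar unfolding is_RQE_def by auto
  have Denv1': "\<And>s a. \<forall>Pt\<in>prob_simplex. 0 \<le> Denv1 G Pt (trans G s a)"
    using Denv trans by blast
  have Denv2': "\<And>s a. \<forall>Pt\<in>prob_simplex. 0 \<le> Denv2 G Pt (trans G s a)"
    using Denv trans by blast
  have best1: "stage_cost (eps1 G) (nu1 G) (D1 G) (mat1 Q1 s) (pi1 s) (pi2 s)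
      \<le> stage_cost (eps1 G) (nu1 G) (D1 G) (mat1 Q1 s) y (pi2 s)" if "y \<in> prob_simplex" for s y
    using pistar that Qs unfolding is_RQE_def f1_def by simp
  have best2: "stage_cost (eps2 G) (nu2 G) (D2 G) (mat2 Q2 s) (pi2 s) (pi1 s)
      \<le> stage_cost (eps2 G) (nu2 G) (D2 G) (mat2 Q2 s) y (pi1 s)" if "y \<in> prob_simplex" for s y
    using pistar that Qs unfolding is_RQE_def f2_def by simp
  have opt1: "V1 G pi1' pi2 s \<le> V1 G pi1 pi2 s" if "markov_policy pi1'" for pi1' s
  proof -
    have pi1's: "\<And>s. pi1' s \<in> prob_simplex" using that unfolding markov_policy_def by blast
    show ?thesis unfolding V1_def f1_def
      apply (rule player_opt[where M=mat1 and Q=Q1 and Denv="Denv1 G" and P="trans G" and gamma="disc G"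
          and D="D1 G" and pii=pi1 and pii'=pi1' and pimi=pi2 and eps="eps1 G" and nu="nu1 G" and r="rew1 G"])
       apply (rule Denv1')
      apply (rule disc(1))
     apply (rule disc(2))
    apply (rule cont1)
    apply (rule pi1s)
    apply (rule pi1's)
    apply (rule pi2s)
    apply (rule mat1_shift)
    apply (simp add: mat1_def)
    apply (rule fp1)
    apply (rule best1, assumption)
    done
  qed
  have opt2: "V2 G pi1 pi2' s \<le> V2 G pi1 pi2 s" if "markov_policy pi2'" for pi2' s
  proof -
    have pi2's: "\<And>s. pi2' s \<in> prob_simplex" using that unfolding markov_policy_def by blast
    show ?thesis unfolding V2_def f2_def
      apply (rule player_opt[where M=mat2 and Q=Q2 and Denv="Denv2 G" and P="trans G" and gamma="disc G"
          and D="D2 G" and pii=pi2 and pii'=pi2' and pimi=pi1 and eps="eps2 G" and nu="nu2 G" and r="rew2 G"])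
       apply (rule Denv2')
      apply (rule disc(1))
     apply (rule disc(2))
    apply (rule cont2)
    apply (rule pi2s)
    apply (rule pi2's)
    apply (rule pi1s)
    apply (rule mat2_shift)
    apply (simp add: mat2_def)
    apply (rule fp2)
    apply (rule best2, assumption)
    done
  qed
  have m1: "markov_policy pi1" unfolding markov_policy_def using pi1s by blast
  have m2: "markov_policy pi2" unfolding markov_policy_def using pi2s by blast
  show ?thesis
    unfolding is_markov_RQE_def using m1 m2 opt1 opt2 by blast
qed

end
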